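(* Let $L$ be a nonarchimedean field extension of a perfectoid field $K$ such that the residue field $\widetilde L$ has positive transcendence degree over $\widetilde K$, and assume $\widetilde K$ is uncountable. Then $L$ is not a quotient field of a perfectoid Tate algebra $K\langle x_1^{1/p^\infty},\dots,x_n^{1/p^\infty}\rangle$ in any number $n$ of variables (i.e., there is no continuous surjection from such an algebra onto $L$).
   Context: Tildes denote residue fields of nonarchimedean fields. *)

theory Defs
  imports Complex_Main "HOL-Library.Countable_Set" "HOL-Computational_Algebra.Primes"
begin

definition nonarch_abs :: "('a::field \<Rightarrow> real) \<Rightarrow> bool" where
  "nonarch_abs v \<longleftrightarrow> (\<forall>x. 0 \<le> v x) \<and> (\<forall>x. v x = 0 \<longleftrightarrow> x = 0)
     \<and> (\<forall>x y. v (x * y) = v x * v y) \<and> (\<forall>x y. v (x + y) \<le> max (v x) (v y))"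

definition nonarch_field :: "('a::field \<Rightarrow> real) \<Rightarrow> bool" where
  "nonarch_field v \<longleftrightarrow> nonarch_abs v \<and> (\<exists>x. x \<noteq> 0 \<and> v x \<noteq> 1)"

definition abs_complete :: "('a::field \<Rightarrow> real) \<Rightarrow> bool" where
  "abs_complete v \<longleftrightarrow> (\<forall>X :: nat \<Rightarrow> 'a.
     (\<forall>e>0. \<exists>N. \<forall>m\<ge>N. \<forall>n\<ge>N. v (X m - X n) < e)
       \<longrightarrow> (\<exists>l. \<forall>e>0. \<exists>N. \<forall>n\<ge>N. v (X n - l) < e))"

text \<open>Perfectoid field (Scholze): complete nonarchimedean field of residue characteristic p
  whose value group is nondiscrete (1 is an accumulation point of the value group), such that
  Frobenius is surjective on K-circ / p.\<close>
definition perfectoid_field :: "('a::field \<Rightarrow> real) \<Rightarrow> nat \<Rightarrow> bool" where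
  "perfectoid_field v p \<longleftrightarrow> nonarch_field v \<and> abs_complete v \<and> prime p \<and> v (of_nat p) < 1
     \<and> (\<forall>\<epsilon>>0. \<exists>x. x \<noteq> 0 \<and> v x \<noteq> 1 \<and> \<bar>v x - 1\<bar> < \<epsilon>)
     \<and> (\<forall>x. v x \<le> 1 \<longrightarrow> (\<exists>y. v y \<le> 1 \<and> v (y ^ p - x) \<le> v (of_nat p)))"

definition nonarch_ext :: "('k::field \<Rightarrow> real) \<Rightarrow> ('l::field \<Rightarrow> real) \<Rightarrow> ('k \<Rightarrow> 'l) \<Rightarrow> bool" where
  "nonarch_ext vK vL \<iota> \<longleftrightarrow> nonarch_field vL
     \<and> (\<forall>a b. \<iota> (a + b) = \<iota> a + \<iota> b) \<and> (\<forall>a b. \<iota> (a * b) = \<iota> a * \<iota> b) \<and> \<iota> 1 = 1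
     \<and> (\<forall>a. vL (\<iota> a) = vK a)"

definition residue_field :: "('a::field \<Rightarrow> real) \<Rightarrow> 'a set set" where
  "residue_field v = {x. v x \<le> 1} // {(x, y). v x \<le> 1 \<and> v y \<le> 1 \<and> v (x - y) < 1}"

text \<open>For t in the valuation ring of L: the residue class of t is algebraic over the residue
  field of K, i.e. it is a root of a nonzero polynomial with coefficients in the residue field
  of K (written on representatives: coefficients c i in the valuation ring of K, not all in the
  maximal ideal, and the value of the polynomial at t lies in the maximal ideal of L).\<close>
definition residue_algebraic :: "('k::field \<Rightarrow> real) \<Rightarrow> ('l::field \<Rightarrow> real) \<Rightarrow> ('k \<Rightarrow> 'l) \<Rightarrow> 'l \<Rightarrow> bool" where
  "residue_algebraic vK vL \<iota> t \<longleftrightarrow> (\<exists>(n::nat) (c::nat \<Rightarrow> 'k).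
     (\<forall>i\<le>n. vK (c i) \<le> 1) \<and> (\<exists>i\<le>n. \<not> vK (c i) < 1)
     \<and> vL (\<Sum>i\<le>n. \<iota> (c i) * t ^ i) < 1)"

text \<open>Positive transcendence degree of the residue field extension: the extension is not
  algebraic, i.e. some residue class is transcendental.\<close>
definition residue_trdeg_pos :: "('k::field \<Rightarrow> real) \<Rightarrow> ('l::field \<Rightarrow> real) \<Rightarrow> ('k \<Rightarrow> 'l) \<Rightarrow> bool" where
  "residue_trdeg_pos vK vL \<iota> \<longleftrightarrow> (\<exists>t. vL t \<le> 1 \<and> \<not> residue_algebraic vK vL \<iota> t)"

text \<open>Exponents: vectors in (Z[1/p]_{\<ge>0})^n, encoded as functions nat => rat vanishing from n on.\<close>
definition pexp :: "nat \<Rightarrow> nat \<Rightarrow> (nat \<Rightarrow> rat) set" where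
  "pexp p n = {e. (\<forall>i. 0 \<le> e i) \<and> (\<forall>i\<ge>n. e i = 0)
                 \<and> (\<forall>i. \<exists>k m. e i = of_nat k / of_nat (p ^ m))}"

text \<open>Elements: formal series sum a_e x^e with coefficients tending to zero.\<close>
definition perfd_tate :: "('k::field \<Rightarrow> real) \<Rightarrow> nat \<Rightarrow> nat \<Rightarrow> ((nat \<Rightarrow> rat) \<Rightarrow> 'k) set" where
  "perfd_tate v p n = {a. (\<forall>e. e \<notin> pexp p n \<longrightarrow> a e = 0) \<and> (\<forall>\<epsilon>>0. finite {e. \<epsilon> \<le> v (a e)})}"

definition has_vsum :: "('k::field \<Rightarrow> real) \<Rightarrow> ('i \<Rightarrow> 'k) \<Rightarrow> 'i set \<Rightarrow> 'k \<Rightarrow> bool" where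
  "has_vsum v f S s \<longleftrightarrow> (\<forall>\<epsilon>>0. \<exists>F0. finite F0 \<and> F0 \<subseteq> S \<and>
     (\<forall>F. finite F \<and> F0 \<subseteq> F \<and> F \<subseteq> S \<longrightarrow> v (sum f F - s) < \<epsilon>))"

definition tate_add :: "((nat \<Rightarrow> rat) \<Rightarrow> 'k::field) \<Rightarrow> ((nat \<Rightarrow> rat) \<Rightarrow> 'k) \<Rightarrow> ((nat \<Rightarrow> rat) \<Rightarrow> 'k)" where
  "tate_add a b = (\<lambda>e. a e + b e)"

definition tate_mult :: "('k::field \<Rightarrow> real) \<Rightarrow> nat \<Rightarrow> nat \<Rightarrow>
    ((nat \<Rightarrow> rat) \<Rightarrow> 'k) \<Rightarrow> ((nat \<Rightarrow> rat) \<Rightarrow> 'k) \<Rightarrow> ((nat \<Rightarrow> rat) \<Rightarrow> 'k)" where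
  "tate_mult v p n a b = (\<lambda>e. THE s. has_vsum v (\<lambda>(e1, e2). a e1 * b e2)
      {(e1, e2). e1 \<in> pexp p n \<and> e2 \<in> pexp p n \<and> (\<forall>i. e1 i + e2 i = e i)} s)"

definition tate_const :: "'k::field \<Rightarrow> ((nat \<Rightarrow> rat) \<Rightarrow> 'k)" where
  "tate_const c = (\<lambda>e. if (\<forall>i. e i = 0) then c else 0)"

definition gauss_norm :: "('k::field \<Rightarrow> real) \<Rightarrow> ((nat \<Rightarrow> rat) \<Rightarrow> 'k) \<Rightarrow> real" where
  "gauss_norm v a = Sup (range (\<lambda>e. v (a e)))"

definition tate_quotient_map :: "('k::field \<Rightarrow> real) \<Rightarrow> ('l::field \<Rightarrow> real) \<Rightarrow> ('k \<Rightarrow> 'l) \<Rightarrow>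
    nat \<Rightarrow> nat \<Rightarrow> (((nat \<Rightarrow> rat) \<Rightarrow> 'k) \<Rightarrow> 'l) \<Rightarrow> bool" where
  "tate_quotient_map vK vL \<iota> p n \<phi> \<longleftrightarrow>
     (\<forall>a\<in>perfd_tate vK p n. \<forall>b\<in>perfd_tate vK p n.
        \<phi> (tate_add a b) = \<phi> a + \<phi> b \<and> \<phi> (tate_mult vK p n a b) = \<phi> a * \<phi> b)
     \<and> (\<forall>c. \<phi> (tate_const c) = \<iota> c)
     \<and> (\<forall>a\<in>perfd_tate vK p n. \<forall>\<epsilon>>0. \<exists>\<delta>>0. \<forall>b\<in>perfd_tate vK p n.
          gauss_norm vK (\<lambda>e. b e - a e) < \<delta> \<longrightarrow> vL (\<phi> b - \<phi> a) < \<epsilon>)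
     \<and> \<phi> ` perfd_tate vK p n = UNIV"

end

theory Submission
  imports Defs "HOL-Computational_Algebra.Polynomial"
begin


context
  fixes v :: "'a::field \<Rightarrow> real"
  assumes na: "nonarch_abs v"
begin

lemma na_nonneg: "0 \<le> v x" using na unfolding nonarch_abs_def by blast
lemma na_zero [simp]: "v 0 = 0" using na unfolding nonarch_abs_def by blast
lemma na_eq0: "v x = 0 \<longleftrightarrow> x = 0" using na unfolding nonarch_abs_def by blast
lemma na_mult: "v (x * y) = v x * v y" using na unfolding nonarch_abs_def by blast
lemma na_add: "v (x + y) \<le> max (v x) (v y)" using na unfolding nonarch_abs_def by blast

lemma na_one [simp]: "v 1 = 1"
proof -
  have "v 1 = v 1 * v 1" using na_mult[of 1 1] by simp
  moreover have "v 1 \<noteq> 0" using na_eq0[of 1] by simp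
  ultimately show ?thesis by simp
qed

lemma na_minus [simp]: "v (- x) = v x"
proof -
  have "v (-1) * v (-1) = 1" using na_mult[of "-1" "-1"] by simp
  moreover have "v (-1) \<ge> 0" by (rule na_nonneg)
  ultimately have "(v (-1) - 1) * (v (-1) + 1) = 0" "v (-1) + 1 \<noteq> 0"
    by (simp_all add: algebra_simps)
  then have "v (-1) = 1" by simp
  then show ?thesis using na_mult[of "-1" x] by simp
qed

lemma na_diff: "v (x - y) \<le> max (v x) (v y)"
  using na_add[of x "-y"] by simp

lemma na_diff_comm: "v (x - y) = v (y - x)"
  by (metis minus_diff_eq na_minus)

lemma na_inverse: "v (inverse x) = inverse (v x)"
proof (cases "x = 0")
  case False
  then have "v x * v (inverse x) = 1" using na_mult[of x "inverse x"] by simp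
  then show ?thesis by (metis inverse_unique)
qed simp

lemma na_divide: "v (x / y) = v x / v y"
  by (simp add: divide_inverse na_mult na_inverse)

lemma na_sum_lt: "finite S \<Longrightarrow> 0 < r \<Longrightarrow> (\<And>i. i \<in> S \<Longrightarrow> v (f i) < r) \<Longrightarrow> v (sum f S) < r"
proof (induction S rule: finite_induct)
  case (insert x F)
  have "v (sum f (insert x F)) \<le> max (v (f x)) (v (sum f F))"
    using insert(1,2) na_add[of "f x" "sum f F"] by simp
  moreover have "v (f x) < r" "v (sum f F) < r" using insert by auto
  ultimately show ?case by linarith
qed simp

lemma na_sum_le: "finite S \<Longrightarrow> 0 \<le> r \<Longrightarrow> (\<And>i. i \<in> S \<Longrightarrow> v (f i) \<le> r) \<Longrightarrow> v (sum f S) \<le> r"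
proof (induction S rule: finite_induct)
  case (insert x F)
  have "v (sum f (insert x F)) \<le> max (v (f x)) (v (sum f F))"
    using insert(1,2) na_add[of "f x" "sum f F"] by simp
  moreover have "v (f x) \<le> r" "v (sum f F) \<le> r" using insert by auto
  ultimately show ?case by linarith
qed simp

lemma na_prod: "v (prod f S) = (\<Prod>i\<in>S. v (f i))"
proof (induction S rule: infinite_finite_induct)
  case (insert x F)
  then show ?case by (simp add: na_mult)
qed simp_all

lemma na_has_vsum_unique:
  assumes "has_vsum v f S s1" "has_vsum v f S s2"
  shows "s1 = s2"
proof -
  have "v (s1 - s2) < e" if "e > 0" for e
  proof -
    have "\<exists>F0. finite F0 \<and> F0 \<subseteq> S \<and> (\<forall>F. finite F \<and> F0 \<subseteq> F \<and> F \<subseteq> S \<longrightarrow> v (sum f F - s1) < e)"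
      using assms(1) \<open>e > 0\<close> unfolding has_vsum_def by simp
    then obtain F1 where F1: "finite F1 \<and> F1 \<subseteq> S \<and> (\<forall>F. finite F \<and> F1 \<subseteq> F \<and> F \<subseteq> S \<longrightarrow> v (sum f F - s1) < e)" ..
    have "\<exists>F0. finite F0 \<and> F0 \<subseteq> S \<and> (\<forall>F. finite F \<and> F0 \<subseteq> F \<and> F \<subseteq> S \<longrightarrow> v (sum f F - s2) < e)"
      using assms(2) \<open>e > 0\<close> unfolding has_vsum_def by simp
    then obtain F2 where F2: "finite F2 \<and> F2 \<subseteq> S \<and> (\<forall>F. finite F \<and> F2 \<subseteq> F \<and> F \<subseteq> S \<longrightarrow> v (sum f F - s2) < e)" ..
    let ?F = "F1 \<union> F2"
    have a: "v (sum f ?F - s1) < e" "v (sum f ?F - s2) < e" using F1 F2 by (meson finite_UnI sup.boundedI sup_ge1 sup_ge2)+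
    have "s1 - s2 = (sum f ?F - s2) - (sum f ?F - s1)" by simp
    then have "v (s1 - s2) \<le> max (v (sum f ?F - s2)) (v (sum f ?F - s1))"
      using na_diff[of "sum f ?F - s2" "sum f ?F - s1"] by simp
    with a show ?thesis by simp
  qed
  then have "v (s1 - s2) \<le> 0" by (metis less_irrefl not_le)
  then have "v (s1 - s2) = 0" using na_nonneg[of "s1 - s2"] by simp
  then show ?thesis using na_eq0 by simp
qed

end



lemma map_poly_add_h:
  assumes "f 0 = 0" "\<And>x y. f (x + y) = f x + f y"
  shows "map_poly f (p + q) = map_poly f p + map_poly f q"
  by (intro poly_eqI) (simp add: coeff_map_poly assms)

lemma map_poly_mult_h:
  assumes "f 0 = 0" "\<And>x y. f (x + y) = f x + f y" "\<And>x y. f (x * y) = f x * f y"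
  shows "map_poly f (p * q) = map_poly f p * map_poly f q"
proof (induction p rule: pCons_induct)
  case (pCons a p)
  then show ?case
    by (simp add: map_poly_add_h[OF assms(1,2)] map_poly_smult[of f, OF assms(1,3)] map_poly_pCons[of f, OF assms(1)] assms(1))
qed simp

lemma map_poly_sum_h:
  assumes "f 0 = 0" "\<And>x y. f (x + y) = f x + f y"
  shows "map_poly f (\<Sum>i\<in>A. P i) = (\<Sum>i\<in>A. map_poly f (P i))"
  by (induction A rule: infinite_finite_induct) (simp_all add: map_poly_add_h[OF assms])

lemma map_poly_prod_h:
  assumes "f 0 = 0" "\<And>x y. f (x + y) = f x + f y" "\<And>x y. f (x * y) = f x * f y" "f 1 = 1"
  shows "map_poly f (\<Prod>i\<in>A. P i) = (\<Prod>i\<in>A. map_poly f (P i))"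
  by (induction A rule: infinite_finite_induct) (simp_all add: map_poly_mult_h[OF assms(1-3)] assms(4))

definition pb :: "('a::field \<Rightarrow> real) \<Rightarrow> 'a poly \<Rightarrow> bool" where
  "pb v p \<longleftrightarrow> (\<forall>i. v (coeff p i) \<le> 1)"

context
  fixes v :: "'a::field \<Rightarrow> real"
  assumes na: "nonarch_abs v"
begin

declare na_zero[OF na, simp] na_one[OF na, simp] na_minus[OF na, simp]

lemma pb_add: "pb v p \<Longrightarrow> pb v q \<Longrightarrow> pb v (p + q)"
  unfolding pb_def using na_add[OF na] by (metis coeff_add max.bounded_iff order.trans)

lemma pb_smult: "v a \<le> 1 \<Longrightarrow> pb v q \<Longrightarrow> pb v (smult a q)"
  unfolding pb_def by (simp add: na_mult[OF na] mult_le_one na_nonneg[OF na])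

lemma pb_pCons0: "pb v q \<Longrightarrow> pb v (pCons 0 q)"
  unfolding pb_def by (simp add: coeff_pCons split: nat.splits)

lemma pb_pConsD: "pb v (pCons a q) \<Longrightarrow> pb v q \<and> v a \<le> 1"
  unfolding pb_def by (metis coeff_pCons_0 coeff_pCons_Suc)

lemma pb_mult: "pb v p \<Longrightarrow> pb v q \<Longrightarrow> pb v (p * q)"
proof (induction p rule: pCons_induct)
  case (pCons a p)
  then show ?case using pb_pConsD[OF pCons.prems(1)]
    by (simp add: pb_add pb_smult pb_pCons0)
qed simp

lemma pb_one: "pb v 1"
  unfolding pb_def by (simp add: coeff_1 na_nonneg[OF na])

lemma pb_sum: "(\<And>i. i \<in> A \<Longrightarrow> pb v (P i)) \<Longrightarrow> pb v (\<Sum>i\<in>A. P i)"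
proof (induction A rule: infinite_finite_induct)
  case (infinite A)
  then show ?case by (simp add: pb_def na_nonneg[OF na])
next
  case empty
  then show ?case by (simp add: pb_def na_nonneg[OF na])
next
  case (insert x F)
  then show ?case by (simp add: pb_add)
qed

lemma pb_prod: "(\<And>i. i \<in> A \<Longrightarrow> pb v (P i)) \<Longrightarrow> pb v (\<Prod>i\<in>A. P i)"
proof (induction A rule: infinite_finite_induct)
  case (insert x F)
  then show ?case by (simp add: pb_mult)
qed (simp_all add: pb_one)

lemma pb_lin: "v a \<le> 1 \<Longrightarrow> pb v [:- a, 1:]"
  unfolding pb_def by (simp add: coeff_pCons na_nonneg[OF na] split: nat.splits)

lemma poly_small:
  assumes "\<forall>i. v (coeff p i) < 1" "v x \<le> 1"
  shows "v (poly p x) < 1"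
  using assms(1)
proof (induction p rule: pCons_induct)
  case (pCons a p)
  have ha: "v a < 1" using pCons.prems by (metis coeff_pCons_0)
  have "\<forall>i. v (coeff p i) < 1" using pCons.prems by (metis coeff_pCons_Suc)
  then have hp: "v (poly p x) < 1" using pCons.IH by simp
  have "v (x * poly p x) \<le> v (poly p x)"
    using na_mult[OF na] na_nonneg[OF na] assms(2) by (simp add: mult_left_le_one_le)
  then have "v (x * poly p x) < 1" using hp by simp
  then show ?case using na_add[OF na, of a "x * poly p x"] ha by simp
qed (simp add: na_zero[OF na])

end



lemma core:
  fixes vK :: "'k::field \<Rightarrow> real" and vL :: "'l::field \<Rightarrow> real" and \<iota> :: "'k \<Rightarrow> 'l"
  assumes naK: "nonarch_abs vK" and naL: "nonarch_abs vL"
    and iadd: "\<And>a b. \<iota> (a + b) = \<iota> a + \<iota> b" and imult: "\<And>a b. \<iota> (a * b) = \<iota> a * \<iota> b"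
    and i1: "\<iota> 1 = 1"
    and iv: "\<And>a. vL (\<iota> a) = vK a"
    and t1: "vL t \<le> 1" and tna: "\<not> residue_algebraic vK vL \<iota> t"
    and F: "finite F" and aF: "\<And>X. X \<in> F \<Longrightarrow> vK (a X) \<le> 1"
    and dist: "\<And>X Y. X \<in> F \<Longrightarrow> Y \<in> F \<Longrightarrow> X \<noteq> Y \<Longrightarrow> \<not> vK (a X - a Y) < 1"
    and dF: "\<And>X. X \<in> F \<Longrightarrow> vL (d X - inverse (t - \<iota> (a X))) < 1"
    and rel: "(\<Sum>X\<in>F. \<iota> (c X) * d X) = 0"
    and X0: "X0 \<in> F"
  shows "c X0 = 0"
proof (rule ccontr)
  assume cX0: "c X0 \<noteq> 0"
  note [simp] = na_zero[OF naK] na_one[OF naK] na_minus[OF naK] na_zero[OF naL] na_one[OF naL] na_minus[OF naL]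
  have i0: "\<iota> 0 = 0" using iadd[of 0 0] by (metis add.right_neutral add_left_cancel)
  have iminus: "\<iota> (- b) = - \<iota> b" for b using iadd[of b "-b"] i0 by (simp add: eq_neg_iff_add_eq_0 add.commute)
  have idiff: "\<iota> (b - b') = \<iota> b - \<iota> b'" for b b' using iadd[of b "-b'"] iminus by simp
  have inz: "\<iota> b \<noteq> 0" if "b \<noteq> 0" for b
  proof
    assume "\<iota> b = 0"
    then have "\<iota> (b * inverse b) = 0" by (simp add: imult)
    with that i1 show False by simp
  qed
  have g1: "vL (t - \<iota> b) = 1" if hb: "vK b \<le> 1" for b
  proof -
    have le: "vL (t - \<iota> b) \<le> 1" using na_diff[OF naL, of t "\<iota> b"] t1 hb iv[of b] by simp
    have "\<not> vL (t - \<iota> b) < 1"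
    proof
      assume lt: "vL (t - \<iota> b) < 1"
      define cc where "cc = (\<lambda>i::nat. if i = 0 then - b else 1)"
      have "(\<Sum>i\<le>Suc 0. \<iota> (cc i) * t ^ i) = t - \<iota> b"
        by (simp add: cc_def iminus i1)
      then have "residue_algebraic vK vL \<iota> t"
        unfolding residue_algebraic_def using lt hb
        by (intro exI[of _ "Suc 0"] exI[of _ cc]) (auto simp: cc_def le_Suc_eq)
      with tna show False by simp
    qed
    with le show ?thesis by simp
  qed
  have "Max ((\<lambda>X. vK (c X)) ` F) \<in> (\<lambda>X. vK (c X)) ` F" using F X0 by (intro Max_in) auto
  then obtain j where j: "j \<in> F" "vK (c j) = Max ((\<lambda>X. vK (c X)) ` F)" by auto
  have jmax: "vK (c X) \<le> vK (c j)" if "X \<in> F" for X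
    using j(2) F that by simp
  have cjpos: "vK (c j) > 0"
    using jmax[OF X0] cX0 na_eq0[OF naK, of "c X0"] na_nonneg[OF naK, of "c X0"] by simp
  then have cj: "c j \<noteq> 0" by auto
  define c' where "c' X = c X / c j" for X
  have c'b: "vK (c' X) \<le> 1" if "X \<in> F" for X
    using jmax[OF that] cjpos by (simp add: c'_def na_divide[OF naK])
  have c'j: "c' j = 1" using cj by (simp add: c'_def)
  have rel': "(\<Sum>X\<in>F. \<iota> (c' X) * d X) = 0"
  proof -
    have "(\<Sum>X\<in>F. \<iota> (c' X) * d X) = \<iota> (inverse (c j)) * (\<Sum>X\<in>F. \<iota> (c X) * d X)"
      by (simp add: c'_def divide_inverse imult sum_distrib_left mult.assoc mult.left_commute)
    with rel show ?thesis by simp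
  qed
  define g where "g X = t - \<iota> (a X)" for X
  define u where "u X = inverse (g X)" for X
  have gv: "vL (g X) = 1" if "X \<in> F" for X using g1[OF aF[OF that]] by (simp add: g_def)
  have gnz: "g X \<noteq> 0" if "X \<in> F" for X using gv[OF that] by auto
  have ug: "u X * g X = 1" if "X \<in> F" for X using gnz[OF that] by (simp add: u_def)
  have S1: "vL (\<Sum>X\<in>F. \<iota> (c' X) * u X) < 1"
  proof -
    have "(\<Sum>X\<in>F. \<iota> (c' X) * u X) = (\<Sum>X\<in>F. \<iota> (c' X) * u X) - (\<Sum>X\<in>F. \<iota> (c' X) * d X)"
      using rel' by simp
    also have "\<dots> = (\<Sum>X\<in>F. \<iota> (c' X) * (u X - d X))"
      by (simp add: sum_subtractf right_diff_distrib)
    finally have eq: "(\<Sum>X\<in>F. \<iota> (c' X) * u X) = (\<Sum>X\<in>F. \<iota> (c' X) * (u X - d X))" .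
    have "vL (\<iota> (c' X) * (u X - d X)) < 1" if "X \<in> F" for X
    proof -
      have a1: "vL (u X - d X) < 1" using dF[OF that] na_diff_comm[OF naL, of "u X" "d X"]
        by (simp add: u_def g_def)
      have "vL (\<iota> (c' X) * (u X - d X)) = vK (c' X) * vL (u X - d X)"
        by (simp add: na_mult[OF naL] iv)
      also have "\<dots> \<le> vL (u X - d X)"
        using c'b[OF that] na_nonneg[OF naL] by (simp add: mult_left_le_one_le na_nonneg[OF naK])
      finally show ?thesis using a1 by simp
    qed
    then show ?thesis unfolding eq by (intro na_sum_lt[OF naL F]) auto
  qed
  define Q where "Q = (\<Prod>X\<in>F. g X)"
  have Qv: "vL Q = 1" unfolding Q_def na_prod[OF naL] using gv by simp
  have S2: "(\<Sum>X\<in>F. \<iota> (c' X) * u X) * Q = (\<Sum>X\<in>F. \<iota> (c' X) * (\<Prod>Y\<in>F-{X}. g Y))"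
    unfolding sum_distrib_right
  proof (rule sum.cong[OF refl])
    fix X assume X: "X \<in> F"
    have "Q = g X * (\<Prod>Y\<in>F-{X}. g Y)" unfolding Q_def using prod.remove[OF F X] .
    then show "\<iota> (c' X) * u X * Q = \<iota> (c' X) * (\<Prod>Y\<in>F-{X}. g Y)"
      using ug[OF X] by (simp add: mult.assoc)
  qed
  have S3: "vL (\<Sum>X\<in>F. \<iota> (c' X) * (\<Prod>Y\<in>F-{X}. g Y)) < 1"
    using S1 Qv unfolding S2[symmetric] na_mult[OF naL] by simp
  define P where "P = (\<Sum>X\<in>F. smult (c' X) (\<Prod>Y\<in>F-{X}. [:- a Y, 1:]))"
  have PL: "poly (map_poly \<iota> P) t = (\<Sum>X\<in>F. \<iota> (c' X) * (\<Prod>Y\<in>F-{X}. g Y))"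
    unfolding P_def
    by (simp add: map_poly_sum_h[of \<iota>, OF i0 iadd] map_poly_smult[of \<iota>, OF i0 imult]
        map_poly_prod_h[of \<iota>, OF i0 iadd imult i1] map_poly_pCons[of \<iota>, OF i0] i0 i1 iminus
        poly_sum poly_prod g_def)
  have degP: "degree (map_poly \<iota> P) = degree P"
    by (rule degree_map_poly) (use inz in auto)
  have alt: "poly (map_poly \<iota> P) t = (\<Sum>i\<le>degree P. \<iota> (coeff P i) * t ^ i)"
    unfolding poly_altdef degP by (simp add: coeff_map_poly i0)
  have pbP: "pb vK P"
    unfolding P_def
    by (intro pb_sum[OF naK] pb_smult[OF naK] pb_prod[OF naK] pb_lin[OF naK] c'b aF) auto
  have unit: "\<exists>i. \<not> vK (coeff P i) < 1"
  proof (rule ccontr)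
    assume "\<not> (\<exists>i. \<not> vK (coeff P i) < 1)"
    then have "vK (poly P (a j)) < 1" using poly_small[OF naK, of P "a j"] aF[OF j(1)] by auto
    moreover have "poly P (a j) = c' j * (\<Prod>Y\<in>F-{j}. (a j - a Y))"
    proof -
      have "poly P (a j) = (\<Sum>X\<in>F. c' X * (\<Prod>Y\<in>F-{X}. (a j - a Y)))"
        unfolding P_def by (simp add: poly_sum poly_prod)
      also have "\<dots> = c' j * (\<Prod>Y\<in>F-{j}. (a j - a Y)) + (\<Sum>X\<in>F-{j}. c' X * (\<Prod>Y\<in>F-{X}. (a j - a Y)))"
        using sum.remove[OF F j(1)] by simp
      also have "(\<Sum>X\<in>F-{j}. c' X * (\<Prod>Y\<in>F-{X}. (a j - a Y))) = 0"
      proof (rule sum.neutral, rule ballI)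
        fix X assume X: "X \<in> F - {j}"
        have "(\<Prod>Y\<in>F-{X}. (a j - a Y)) = 0"
          by (rule prod_zero) (use F X j(1) in auto)
        then show "c' X * (\<Prod>Y\<in>F-{X}. (a j - a Y)) = 0" by simp
      qed
      finally show ?thesis by simp
    qed
    moreover have "vK (c' j * (\<Prod>Y\<in>F-{j}. (a j - a Y))) = 1"
    proof -
      have "vK (a j - a Y) = 1" if "Y \<in> F - {j}" for Y
      proof -
        have "vK (a j - a Y) \<le> 1" using na_diff[OF naK, of "a j" "a Y"] aF[OF j(1)] aF[of Y] that by auto
        moreover have "\<not> vK (a j - a Y) < 1" using dist[OF j(1), of Y] that by auto
        ultimately show ?thesis by simp
      qed
      then show ?thesis by (simp add: na_mult[OF naK] na_prod[OF naK] c'j)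
    qed
    ultimately show False by simp
  qed
  then obtain i where i: "\<not> vK (coeff P i) < 1" by blast
  have ideg: "i \<le> degree P"
  proof (rule ccontr)
    assume "\<not> i \<le> degree P"
    then have "coeff P i = 0" by (simp add: coeff_eq_0)
    with i show False by simp
  qed
  have "residue_algebraic vK vL \<iota> t"
    unfolding residue_algebraic_def
  proof (rule exI[of _ "degree P"], rule exI[of _ "coeff P"], intro conjI)
    show "\<forall>i\<le>degree P. vK (coeff P i) \<le> 1" using pbP unfolding pb_def by auto
    show "\<exists>i\<le>degree P. \<not> vK (coeff P i) < 1" using i ideg by auto
    show "vL (\<Sum>i\<le>degree P. \<iota> (coeff P i) * t ^ i) < 1" using S3 PL alt by simp
  qed
  with tna show False by simp
qed



lemma pexp_zero: "(\<lambda>_. 0) \<in> pexp p n"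
  unfolding pexp_def by (auto intro!: exI[of _ 0])

lemma tate_mult_single:
  fixes v :: "'a::field \<Rightarrow> real"
  assumes na: "nonarch_abs v" and x: "x \<in> pexp p n"
  shows "tate_mult v p n (tate_const c) (\<lambda>e. if e = x then 1 else 0) = (\<lambda>e. if e = x then c else 0)"
proof (rule ext)
  fix e' :: "nat \<Rightarrow> rat"
  define z :: "nat \<Rightarrow> rat" where "z = (\<lambda>_. 0)"
  define S where "S = {(e1, e2). e1 \<in> pexp p n \<and> e2 \<in> pexp p n \<and> (\<forall>i. e1 i + e2 i = e' i)}"
  define f where "f = (\<lambda>(e1::nat \<Rightarrow> rat, e2::nat \<Rightarrow> rat). tate_const c e1 * (if e2 = x then 1 else (0::'a)))"
  define s where "s = (if e' = x then c else 0)"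
  have fnz: "q = (z, x)" if "f q \<noteq> 0" for q
  proof -
    obtain e1 e2 where q: "q = (e1, e2)" by force
    from that have "tate_const c e1 \<noteq> 0" "e2 = x" by (auto simp: f_def q split: if_splits)
    then have "\<forall>i. e1 i = 0" by (auto simp: tate_const_def split: if_splits)
    then have "e1 = z" by (auto simp: z_def)
    with \<open>e2 = x\<close> show ?thesis by (simp add: q)
  qed
  have fzx: "f (z, x) = c" by (simp add: f_def tate_const_def z_def)
  have zxS: "(z, x) \<in> S" if "e' = x" using that x pexp_zero by (simp add: S_def z_def)
  have key: "sum f F = s" if F: "finite F" "F \<subseteq> S" "e' = x \<longrightarrow> (z, x) \<in> F" for F
  proof (cases "e' = x")
    case True
    then have zx: "(z, x) \<in> F" using F by simp
    have "sum f F = f (z, x) + sum f (F - {(z, x)})" using sum.remove[OF F(1) zx] .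
    also have "sum f (F - {(z, x)}) = 0"
      by (rule sum.neutral) (use fnz in blast)
    finally show ?thesis using True fzx by (simp add: s_def)
  next
    case False
    have "f q = 0" if "q \<in> F" for q
    proof (rule ccontr)
      assume "f q \<noteq> 0"
      then have "q = (z, x)" by (rule fnz)
      with that F(2) have "\<forall>i. z i + x i = e' i" by (auto simp: S_def)
      then have "e' = x" by (auto simp: z_def)
      with False show False by simp
    qed
    then show ?thesis using False by (simp add: s_def)
  qed
  have hs: "has_vsum v f S s"
    unfolding has_vsum_def
  proof (intro allI impI)
    fix \<epsilon> :: real assume "\<epsilon> > 0"
    show "\<exists>F0. finite F0 \<and> F0 \<subseteq> S \<and> (\<forall>F. finite F \<and> F0 \<subseteq> F \<and> F \<subseteq> S \<longrightarrow> v (sum f F - s) < \<epsilon>)"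
    proof (cases "e' = x")
      case True
      show ?thesis
        by (rule exI[of _ "{(z, x)}"]) (use True zxS key na \<open>\<epsilon> > 0\<close> in auto)
    next
      case False
      show ?thesis
        by (rule exI[of _ "{}"]) (use False key na \<open>\<epsilon> > 0\<close> in auto)
    qed
  qed
  have "(THE s. has_vsum v f S s) = s"
    by (rule the_equality[of "\<lambda>s. has_vsum v f S s", OF hs]) (use na_has_vsum_unique[OF na] hs in blast)
  then show "tate_mult v p n (tate_const c) (\<lambda>e. if e = x then 1 else 0) e' = (if e' = x then c else 0)"
    unfolding tate_mult_def S_def f_def s_def by (simp add: case_prod_unfold)
qed



theorem corollary6p5:
  fixes vK :: "'k::field \<Rightarrow> real" and vL :: "'l::field \<Rightarrow> real"
    and \<iota> :: "'k \<Rightarrow> 'l" and p :: nat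
  assumes "perfectoid_field vK p"
    and "nonarch_ext vK vL \<iota>"
    and "residue_trdeg_pos vK vL \<iota>"
    and "uncountable (residue_field vK)"
  shows "\<not> (\<exists>(n::nat) \<phi>. tate_quotient_map vK vL \<iota> p n \<phi>)"
proof
  assume "\<exists>(n::nat) \<phi>. tate_quotient_map vK vL \<iota> p n \<phi>"
  then obtain n \<phi> where tq: "tate_quotient_map vK vL \<iota> p n \<phi>" by blast
  have naK: "nonarch_abs vK" using assms(1) unfolding perfectoid_field_def nonarch_field_def by blast
  have naL: "nonarch_abs vL" using assms(2) unfolding nonarch_ext_def nonarch_field_def by blast
  have iadd: "\<And>a b. \<iota> (a + b) = \<iota> a + \<iota> b" and imult: "\<And>a b. \<iota> (a * b) = \<iota> a * \<iota> b"
    and i1: "\<iota> 1 = 1" and iv: "\<And>a. vL (\<iota> a) = vK a"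
    using assms(2) unfolding nonarch_ext_def by blast+
  note [simp] = na_zero[OF naK] na_one[OF naK] na_minus[OF naK] na_zero[OF naL] na_one[OF naL] na_minus[OF naL]
  have i0: "\<iota> 0 = 0" using iadd[of 0 0] by (metis add.right_neutral add_left_cancel)
  have iminus: "\<iota> (- b) = - \<iota> b" for b using iadd[of b "-b"] i0 by (simp add: eq_neg_iff_add_eq_0 add.commute)
  obtain t where t1: "vL t \<le> 1" and tna: "\<not> residue_algebraic vK vL \<iota> t"
    using assms(3) unfolding residue_trdeg_pos_def by blast
  define PT where "PT = perfd_tate vK p n"
  have hadd: "\<And>a b. a \<in> PT \<Longrightarrow> b \<in> PT \<Longrightarrow> \<phi> (tate_add a b) = \<phi> a + \<phi> b"
    and hmul: "\<And>a b. a \<in> PT \<Longrightarrow> b \<in> PT \<Longrightarrow> \<phi> (tate_mult vK p n a b) = \<phi> a * \<phi> b"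
    and hconst: "\<And>c. \<phi> (tate_const c) = \<iota> c"
    and hcont: "\<And>a \<epsilon>. a \<in> PT \<Longrightarrow> \<epsilon> > 0 \<Longrightarrow> \<exists>\<delta>>0. \<forall>b\<in>PT. gauss_norm vK (\<lambda>e. b e - a e) < \<delta> \<longrightarrow> vL (\<phi> b - \<phi> a) < \<epsilon>"
    and hsurj: "\<phi> ` PT = UNIV"
    using tq unfolding tate_quotient_map_def PT_def by blast+
  define w where "w e = \<phi> (\<lambda>e'. if e' = e then 1 else 0)" for e
  define rs where "rs E g = (\<lambda>e. if e \<in> E then g e else (0::'k))" for E and g :: "(nat \<Rightarrow> rat) \<Rightarrow> 'k"
  have rsPT: "rs E g \<in> PT" if "finite E" "E \<subseteq> pexp p n" for E g
    unfolding PT_def perfd_tate_def mem_Collect_eq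
  proof (intro conjI allI impI)
    fix e assume "e \<notin> pexp p n" then show "rs E g e = 0" using that by (auto simp: rs_def)
  next
    fix \<epsilon> :: real assume "\<epsilon> > 0"
    then have "{e. \<epsilon> \<le> vK (rs E g e)} \<subseteq> E" by (auto simp: rs_def)
    then show "finite {e. \<epsilon> \<le> vK (rs E g e)}" using that(1) finite_subset by blast
  qed
  have singlePT: "(\<lambda>e. if e = x then c else 0) \<in> PT" if "x \<in> pexp p n" for x c
  proof -
    have "(\<lambda>e. if e = x then c else 0) = rs {x} (\<lambda>_. c)" by (auto simp: rs_def)
    then show ?thesis using rsPT[of "{x}" "\<lambda>_. c"] that by simp
  qed
  have constPT: "tate_const c \<in> PT" for c
  proof -
    have "tate_const c = (\<lambda>e. if e = (\<lambda>_. 0) then c else 0)"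
      by (auto simp: tate_const_def fun_eq_iff)
    then show ?thesis using singlePT[OF pexp_zero] by simp
  qed
  have phi_single: "\<phi> (\<lambda>e. if e = x then c else 0) = \<iota> c * w x" if x: "x \<in> pexp p n" for x c
  proof -
    have "\<phi> (\<lambda>e. if e = x then c else 0) = \<phi> (tate_mult vK p n (tate_const c) (\<lambda>e. if e = x then 1 else 0))"
      using tate_mult_single[OF naK x] by simp
    also have "\<dots> = \<iota> c * w x" using hmul[OF constPT singlePT[OF x]] hconst by (simp add: w_def)
    finally show ?thesis .
  qed
  have zPT: "(\<lambda>_. 0) \<in> PT" using rsPT[of "{}"] by (simp add: rs_def)
  have phi0: "\<phi> (\<lambda>_. 0) = 0"
  proof -
    have "tate_add (\<lambda>_. 0) (\<lambda>_. 0) = (\<lambda>_. (0::'k))" by (simp add: tate_add_def)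
    then have "\<phi> (\<lambda>_. 0) = \<phi> (\<lambda>_. 0) + \<phi> (\<lambda>_. 0)" using hadd[OF zPT zPT] by simp
    then show ?thesis by (metis add.right_neutral add_left_cancel)
  qed
  have phi_rs: "\<phi> (rs E g) = (\<Sum>e\<in>E. \<iota> (g e) * w e)" if "finite E" "E \<subseteq> pexp p n" for E g
    using that
  proof (induction E rule: finite_induct)
    case empty
    then show ?case using phi0 by (simp add: rs_def)
  next
    case (insert x F)
    have "rs (insert x F) g = tate_add (\<lambda>e. if e = x then g x else 0) (rs F g)"
      using insert(2) by (intro ext) (auto simp: rs_def tate_add_def)
    then have "\<phi> (rs (insert x F) g) = \<iota> (g x) * w x + \<phi> (rs F g)"
      using hadd[OF singlePT rsPT[OF insert(1)]] phi_single insert(4) by simp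
    then show ?case using insert by simp
  qed
  have approx: "\<exists>E g. finite E \<and> E \<subseteq> pexp p n \<and> vL ((\<Sum>e\<in>E. \<iota> (g e) * w e) - u) < 1" for u
  proof -
    obtain a0 where a0: "a0 \<in> PT" "u = \<phi> a0" using hsurj by (metis UNIV_I image_iff)
    obtain \<delta> where \<delta>: "\<delta> > 0" "\<forall>b\<in>PT. gauss_norm vK (\<lambda>e. b e - a0 e) < \<delta> \<longrightarrow> vL (\<phi> b - \<phi> a0) < 1"
      using hcont[OF a0(1), of 1] by auto
    define E where "E = {e. \<delta> / 2 \<le> vK (a0 e)}"
    have "\<forall>\<epsilon>>0. finite {e. \<epsilon> \<le> vK (a0 e)}" using a0(1) unfolding PT_def perfd_tate_def by blast
    then have Ef: "finite E" using \<delta>(1) unfolding E_def by (metis half_gt_zero)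
    have Ep: "E \<subseteq> pexp p n"
    proof
      fix e assume "e \<in> E"
      then have "\<delta> / 2 \<le> vK (a0 e)" by (simp add: E_def)
      then have "a0 e \<noteq> 0" using \<delta>(1) by auto
      then show "e \<in> pexp p n" using a0(1) unfolding PT_def perfd_tate_def by auto
    qed
    define b where "b = rs E a0"
    have bPT: "b \<in> PT" unfolding b_def by (rule rsPT[OF Ef Ep])
    have "gauss_norm vK (\<lambda>e. b e - a0 e) \<le> \<delta> / 2"
      unfolding gauss_norm_def
    proof (rule cSup_least)
      show "range (\<lambda>e. vK (b e - a0 e)) \<noteq> {}" by simp
    next
      fix y assume "y \<in> range (\<lambda>e. vK (b e - a0 e))"
      then obtain e where y: "y = vK (b e - a0 e)" by auto
      show "y \<le> \<delta> / 2"
      proof (cases "e \<in> E")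
        case True
        then show ?thesis using y \<delta>(1) by (simp add: b_def rs_def)
      next
        case False
        then show ?thesis using y by (simp add: b_def rs_def E_def)
      qed
    qed
    then have "vL (\<phi> b - \<phi> a0) < 1" using \<delta> bPT by auto
    moreover have "\<phi> b = (\<Sum>e\<in>E. \<iota> (a0 e) * w e)" unfolding b_def by (rule phi_rs[OF Ef Ep])
    ultimately have "vL ((\<Sum>e\<in>E. \<iota> (a0 e) * w e) - u) < 1" using a0(2) by simp
    then show ?thesis using Ef Ep by (intro exI[of _ E] exI[of _ a0]) simp
  qed
  interpret vs: vector_space "\<lambda>c x. \<iota> c * x"
    by unfold_locales (simp_all add: distrib_left distrib_right iadd imult i1 mult.assoc)
  define r where "r = {(x, y). vK x \<le> 1 \<and> vK y \<le> 1 \<and> vK (x - y) < 1}"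
  define R where "R = residue_field vK"
  have R_def': "R = {x. vK x \<le> 1} // r" unfolding R_def residue_field_def r_def ..
  have eqv: "equiv {x. vK x \<le> 1} r"
  proof (rule equivI)
    show "r \<subseteq> {x. vK x \<le> 1} \<times> {x. vK x \<le> 1}" by (auto simp: r_def)
    show "refl_on {x. vK x \<le> 1} r" by (auto simp: r_def refl_on_def)
    show "sym r" by (auto simp: r_def sym_def na_diff_comm[OF naK])
    show "trans r" unfolding trans_def r_def
    proof (clarsimp)
      fix x y z assume "vK x \<le> 1" "vK y \<le> 1" "vK z \<le> 1" "vK (x - y) < 1" "vK (y - z) < 1"
      moreover have "vK (x - z) \<le> max (vK (x - y)) (vK (y - z))"
        using na_add[OF naK, of "x - y" "y - z"] by simp
      ultimately show "vK (x - z) < 1" by simp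
    qed
  qed
  have "\<forall>X\<in>R. \<exists>x. x \<in> X" using in_quotient_imp_non_empty[OF eqv] unfolding R_def' by blast
  then obtain a where a: "\<forall>X\<in>R. a X \<in> X" by metis
  have aR: "vK (a X) \<le> 1" if "X \<in> R" for X
    using in_quotient_imp_subset[OF eqv] a that unfolding R_def' by blast
  have adist: "\<not> vK (a X - a Y) < 1" if "X \<in> R" "Y \<in> R" "X \<noteq> Y" for X Y
  proof
    assume "vK (a X - a Y) < 1"
    then have "(a X, a Y) \<in> r" using aR that by (auto simp: r_def)
    then have "X = Y" using quotient_eq_iff[OF eqv, of X Y "a X" "a Y"] that a unfolding R_def' by blast
    with that show False by simp
  qed
  have "\<forall>X\<in>R. \<exists>q. finite (fst q) \<and> fst q \<subseteq> pexp p n \<and>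
      vL ((\<Sum>e\<in>fst q. \<iota> (snd q e) * w e) - inverse (t - \<iota> (a X))) < 1"
  proof
    fix X
    obtain E0 g0 where "finite E0 \<and> E0 \<subseteq> pexp p n \<and> vL ((\<Sum>e\<in>E0. \<iota> (g0 e) * w e) - inverse (t - \<iota> (a X))) < 1"
      using approx by blast
    then show "\<exists>q. finite (fst q) \<and> fst q \<subseteq> pexp p n \<and>
      vL ((\<Sum>e\<in>fst q. \<iota> (snd q e) * w e) - inverse (t - \<iota> (a X))) < 1"
      by (intro exI[of _ "(E0, g0)"]) simp
  qed
  then have "\<exists>q. \<forall>X\<in>R. finite (fst (q X)) \<and> fst (q X) \<subseteq> pexp p n \<and>
      vL ((\<Sum>e\<in>fst (q X). \<iota> (snd (q X) e) * w e) - inverse (t - \<iota> (a X))) < 1"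
    by (rule bchoice)
  then obtain q where q: "\<forall>X\<in>R. finite (fst (q X)) \<and> fst (q X) \<subseteq> pexp p n \<and>
      vL ((\<Sum>e\<in>fst (q X). \<iota> (snd (q X) e) * w e) - inverse (t - \<iota> (a X))) < 1" ..
  define d where "d X = (\<Sum>e\<in>fst (q X). \<iota> (snd (q X) e) * w e)" for X
  have inj_map: "inj_on (\<lambda>e. map e [0..<n]) (pexp p n)"
  proof (rule inj_onI)
    fix e e' assume e: "e \<in> pexp p n" "e' \<in> pexp p n" "map e [0..<n] = map e' [0..<n]"
    show "e = e'"
    proof
      fix i show "e i = e' i"
      proof (cases "i < n")
        case True then show ?thesis using e(3) by (simp add: map_eq_conv)
      next
        case False then show ?thesis using e(1,2) by (simp add: pexp_def)
      qed
    qed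
  qed
  have cpexp: "countable (pexp p n)"
    by (rule countable_image_inj_on[OF _ inj_map]) (rule countableI_type)
  have cFin: "countable {A. finite A \<and> A \<subseteq> pexp p n}"
    by (rule countable_Collect_finite_subset[OF cpexp])
  obtain E0 where inf: "infinite {X\<in>R. fst (q X) = E0}"
  proof (rule ccontr)
    assume "\<not> thesis"
    with that have fin: "\<And>E0. finite {X\<in>R. fst (q X) = E0}" by blast
    have "R = (\<Union>E0\<in>{A. finite A \<and> A \<subseteq> pexp p n}. {X\<in>R. fst (q X) = E0})"
      using q by blast
    also have "countable \<dots>" using cFin fin by (intro countable_UN) (auto intro: countable_finite)
    finally have "countable R" .
    with assms(4) show False unfolding R_def by simp
  qed
  define Fb where "Fb = {X\<in>R. fst (q X) = E0}"
  have "Fb \<noteq> {}" using inf unfolding Fb_def by (metis finite.emptyI)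
  then obtain X1 where "X1 \<in> Fb" by auto
  then have E0f: "finite E0" and E0p: "E0 \<subseteq> pexp p n" using q unfolding Fb_def by auto
  obtain F' where F': "F' \<subseteq> Fb" "finite F'" "card F' = card (w ` E0) + 1"
    using infinite_arbitrarily_large[OF inf[folded Fb_def]] by blast
  have F'R: "F' \<subseteq> R" using F'(1) unfolding Fb_def by auto
  have coreF: "\<forall>X\<in>G. c X = 0" if G: "G \<subseteq> F'" "(\<Sum>X\<in>G. \<iota> (c X) * d X) = 0" for G c
  proof
    fix X0 assume X0: "X0 \<in> G"
    have GR: "G \<subseteq> R" using G(1) F'R by auto
    show "c X0 = 0"
    proof (rule core[OF naK naL iadd imult i1 iv t1 tna, of G a d c X0])
      show "finite G" using G(1) F'(2) finite_subset by blast
      show "\<And>X. X \<in> G \<Longrightarrow> vK (a X) \<le> 1" using aR GR by auto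
      show "\<And>X Y. X \<in> G \<Longrightarrow> Y \<in> G \<Longrightarrow> X \<noteq> Y \<Longrightarrow> \<not> vK (a X - a Y) < 1" using adist GR by auto
      show "\<And>X. X \<in> G \<Longrightarrow> vL (d X - inverse (t - \<iota> (a X))) < 1" using q GR unfolding d_def by auto
      show "(\<Sum>X\<in>G. \<iota> (c X) * d X) = 0" by (rule G(2))
      show "X0 \<in> G" by (rule X0)
    qed
  qed
  have injd: "inj_on d F'"
  proof (rule inj_onI, rule ccontr)
    fix X Y assume XY: "X \<in> F'" "Y \<in> F'" "d X = d Y" "X \<noteq> Y"
    define c :: "'k set \<Rightarrow> 'k" where "c Z = (if Z = X then 1 else - 1)" for Z
    have cX: "c X = 1" and cY: "c Y = - 1" using XY(4) by (simp_all add: c_def)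
    have "(\<Sum>Z\<in>{X, Y}. \<iota> (c Z) * d Z) = \<iota> (c X) * d X + \<iota> (c Y) * d Y"
      using XY(4) by simp
    also have "\<dots> = d X - d Y" unfolding cX cY iminus i1 by simp
    also have "\<dots> = 0" using XY(3) by simp
    finally have "(\<Sum>Z\<in>{X, Y}. \<iota> (c Z) * d Z) = 0" .
    then have "\<forall>Z\<in>{X, Y}. c Z = 0" using coreF[of "{X, Y}" c] XY(1,2) by blast
    then show False using cX by simp
  qed
  have indep: "vs.independent (d ` F')"
  proof
    assume "vs.dependent (d ` F')"
    then obtain T u where T: "finite T" "T \<subseteq> d ` F'" "(\<Sum>v\<in>T. \<iota> (u v) * v) = 0" "\<exists>v\<in>T. u v \<noteq> 0"
      unfolding vs.dependent_explicit by blast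
    define G where "G = {X\<in>F'. d X \<in> T}"
    have TG: "T = d ` G" using T(2) unfolding G_def by auto
    have injG: "inj_on d G" using injd unfolding G_def by (rule inj_on_subset) auto
    have "(\<Sum>X\<in>G. \<iota> (u (d X)) * d X) = 0"
      using T(3) unfolding TG sum.reindex[OF injG] by simp
    then have "\<forall>X\<in>G. u (d X) = 0" using coreF[of G "\<lambda>X. u (d X)"] unfolding G_def by auto
    with T(4) show False unfolding TG by auto
  qed
  have spanned: "d ` F' \<subseteq> vs.span (w ` E0)"
  proof
    fix y assume "y \<in> d ` F'"
    then obtain X where X: "X \<in> F'" "y = d X" by auto
    then have "fst (q X) = E0" using F'(1) unfolding Fb_def by auto
    then have "y = (\<Sum>e\<in>E0. \<iota> (snd (q X) e) * w e)" using X unfolding d_def by simp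
    also have "\<dots> \<in> vs.span (w ` E0)"
      by (intro vs.span_sum vs.span_scale vs.span_base) auto
    finally show "y \<in> vs.span (w ` E0)" .
  qed
  have "card (d ` F') \<le> card (w ` E0)"
    using vs.independent_span_bound[OF finite_imageI[OF E0f] indep spanned] by simp
  moreover have "card (d ` F') = card F'" using card_image[OF injd] .
  ultimately show False using F'(3) by simp
qed

end
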